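(* The optimal control at time step $k$, i.e. the first element of the control sequence minimizing $J_k=\sum_{i=k}^{\infty}\gamma^{i-k}\tfrac12\big((x_i-r_i)^\top Q(x_i-r_i)+u_i^\top R u_i\big)$ subject to $x_{i+1}=Ax_i+Bu_i$, is $$u_k^*=-h_{uu}^{-1}\begin{bmatrix}h_{ux} & h_{ur_1} & \cdots & h_{ur_N}\end{bmatrix}\begin{bmatrix}x_k\\ r_{k+1}\\ \vdots\\ r_{k+N}\end{bmatrix}.$$
   Context: Consider $x_{i+1}=Ax_i+Bu_i$, $x_i\in\mathbb{R}^n$, $u_i\in\mathbb{R}^m$, $(A,B)$ controllable. Fix $k$ and $N\in\mathbb{N}$; references $r_i\in\mathbb{R}^n$ are given for $i=k,\dots,k+N$ and $r_i=0$ for $i>k+N$. The one-step cost is $c_i=\tfrac12\big((x_i-r_i)^\top Q(x_i-r_i)+u_i^\top Ru_i\big)$ with $Q=Q^\top\succeq0$, $R=R^\top\succ0$, $\gamma\in[0,1)$. For horizon $K$, the reference-dependent Q-function is ${}^{K}Q_K=c(x_{k+K},u_{k+K},r_{k+K})$ and ${}^{K}Q_\kappa=c_{k+\kappa}+\gamma\,{}^{K}Q_{\kappa+1}|_{u_{k+\kappa+1}=u^*_{k+\kappa+1}}$ ($0\le\kappa<K$), with $u^*_{k+\kappa+1}$ the minimizer of ${}^{K}Q_{\kappa+1}$. For $K\ge N$ one has ${}^{K}Q_0=\tfrac12[x_k^\top,u_k^\top,r_k^\top,\dots,r_{k+N}^\top,0^\top]H_K[\cdot]$ with a symmetric matrix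 $H_K$ independent of $x_k,u_k$ and the references. In the setting, $Q_0:=\lim_{K\to\infty}{}^{K}Q_0=\tfrac12 z_k^\top H z_k$ where $z_k=[x_k^\top,u_k^\top,r_k^\top,\dots,r_{k+N}^\top]^\top$ and $H$ is the leading $((N+2)n+m)\times((N+2)n+m)$ submatrix of the limit of $H_K$. $H$ is partitioned into blocks $h_{ab}$, $a,b\in\{x,u,r_0,\dots,r_N\}$, of sizes $n,m,n,\dots,n$; in particular $h_{ur_0}=0$. *)

theory Defs
  imports "HOL-Analysis.Analysis"
begin

definition mat_pow :: "real^'n^'n \<Rightarrow> nat \<Rightarrow> real^'n^'n" where
  "mat_pow A i = (((**) A) ^^ i) (mat 1)"

definition controllable :: "real^'n^'n \<Rightarrow> real^'m^'n \<Rightarrow> bool" where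
  "controllable A B \<longleftrightarrow>
     (\<forall>y::real^'n. \<exists>v::nat \<Rightarrow> real^'m. y = (\<Sum>i<CARD('n). mat_pow A i *v (B *v v i)))"

definition psd :: "real^'n^'n \<Rightarrow> bool" where
  "psd M \<longleftrightarrow> transpose M = M \<and> (\<forall>x. 0 \<le> x \<bullet> (M *v x))"

definition pd :: "real^'n^'n \<Rightarrow> bool" where
  "pd M \<longleftrightarrow> transpose M = M \<and> (\<forall>x. x \<noteq> 0 \<longrightarrow> 0 < x \<bullet> (M *v x))"

definition stage_cost :: "real^'n^'n \<Rightarrow> real^'m^'m \<Rightarrow> real^'n \<Rightarrow> real^'m \<Rightarrow> real^'n \<Rightarrow> real" where
  "stage_cost Q R x u r = (1/2) * ((x - r) \<bullet> (Q *v (x - r)) + u \<bullet> (R *v u))"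

text \<open>Reference-dependent Q-function with horizon K.
  qfun A B Q R \<gamma> r k K d x u  is  ^K Q_\<kappa>(x,u) with \<kappa> = K - d (d = steps to go).
  The term  ^K Q_{\<kappa>+1} evaluated at its minimizer u^*  is the minimum value,
  written as an infimum over the next control.\<close>
fun qfun :: "real^'n^'n \<Rightarrow> real^'m^'n \<Rightarrow> real^'n^'n \<Rightarrow> real^'m^'m \<Rightarrow> real \<Rightarrow>
    (nat \<Rightarrow> real^'n) \<Rightarrow> nat \<Rightarrow> nat \<Rightarrow> nat \<Rightarrow> real^'n \<Rightarrow> real^'m \<Rightarrow> real" where
  "qfun A B Q R \<gamma> r k K 0 x u = stage_cost Q R x u (r (k + K))"
| "qfun A B Q R \<gamma> r k K (Suc d) x u =
     stage_cost Q R x u (r (k + (K - Suc d)))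
     + \<gamma> * (INF v. qfun A B Q R \<gamma> r k K d (A *v x + B *v u) v)"

text \<open>State trajectory from x_k under controls u (absolute time index):
  traj ... j = x_{k+j}.\<close>
fun traj :: "real^'n^'n \<Rightarrow> real^'m^'n \<Rightarrow> nat \<Rightarrow> real^'n \<Rightarrow> (nat \<Rightarrow> real^'m) \<Rightarrow> nat \<Rightarrow> real^'n" where
  "traj A B k x0 u 0 = x0"
| "traj A B k x0 u (Suc j) = A *v traj A B k x0 u j + B *v u (k + j)"

definition Jcost :: "real^'n^'n \<Rightarrow> real^'m^'n \<Rightarrow> real^'n^'n \<Rightarrow> real^'m^'m \<Rightarrow> real \<Rightarrow>
    (nat \<Rightarrow> real^'n) \<Rightarrow> nat \<Rightarrow> real^'n \<Rightarrow> (nat \<Rightarrow> real^'m) \<Rightarrow> ennreal" where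
  "Jcost A B Q R \<gamma> r k x0 u =
     (\<Sum>j. ennreal (\<gamma> ^ j * stage_cost Q R (traj A B k x0 u j) (u (k + j)) (r (k + j))))"

text \<open>Block quadratic form  z^T H z  with z = [x; u; r_0; ...; r_N] (rho j = r_j).\<close>
definition block_qf ::
  "real^'n^'n \<Rightarrow> real^'m^'n \<Rightarrow> (nat \<Rightarrow> real^'n^'n) \<Rightarrow>
   real^'n^'m \<Rightarrow> real^'m^'m \<Rightarrow> (nat \<Rightarrow> real^'n^'m) \<Rightarrow>
   (nat \<Rightarrow> real^'n^'n) \<Rightarrow> (nat \<Rightarrow> real^'m^'n) \<Rightarrow> (nat \<Rightarrow> nat \<Rightarrow> real^'n^'n) \<Rightarrow>
   nat \<Rightarrow> real^'n \<Rightarrow> real^'m \<Rightarrow> (nat \<Rightarrow> real^'n) \<Rightarrow> real" where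
  "block_qf hxx hxu hxr hux huu hur hrx hru hrr N x u \<rho> =
     x \<bullet> (hxx *v x) + x \<bullet> (hxu *v u) + (\<Sum>j\<le>N. x \<bullet> (hxr j *v \<rho> j))
   + u \<bullet> (hux *v x) + u \<bullet> (huu *v u) + (\<Sum>j\<le>N. u \<bullet> (hur j *v \<rho> j))
   + (\<Sum>i\<le>N. \<rho> i \<bullet> (hrx i *v x)) + (\<Sum>i\<le>N. \<rho> i \<bullet> (hru i *v u))
   + (\<Sum>i\<le>N. \<Sum>j\<le>N. \<rho> i \<bullet> (hrr i j *v \<rho> j))"

end

theory Submission imports Defs begin

lemma inf_comb:
  fixes f g :: "'a \<Rightarrow> real"
  assumes "bdd_below (range f)" "bdd_below (range g)" "0 \<le> t" "t \<le> 1"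
    and "\<And>a b. P \<le> t * f a + (1 - t) * g b"
  shows "P \<le> t * (INF a. f a) + (1 - t) * (INF b. g b)"
proof (rule field_le_epsilon)
  fix e :: real assume e: "0 < e"
  have "\<exists>a. f a < (INF a. f a) + e" using cINF_less_iff[OF UNIV_not_empty assms(1), of "(INF a. f a) + e"] e by simp
  then obtain a where a: "f a < (INF a. f a) + e" by blast
  have "\<exists>b. g b < (INF b. g b) + e" using cINF_less_iff[OF UNIV_not_empty assms(2), of "(INF b. g b) + e"] e by simp
  then obtain b where b: "g b < (INF b. g b) + e" by blast
  have "P \<le> t * f a + (1 - t) * g b" by (rule assms(5))
  also have "\<dots> \<le> t * ((INF a. f a) + e) + (1 - t) * ((INF b. g b) + e)"
    using a b assms(3,4) by (intro add_mono mult_left_mono) auto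
  also have "\<dots> = t * (INF a. f a) + (1 - t) * (INF b. g b) + e" by (simp add: algebra_simps)
  finally show "P \<le> t * (INF a. f a) + (1 - t) * (INF b. g b) + e" .
qed

context
  fixes A :: "real^'n^'n" and B :: "real^'m^'n" and Q :: "real^'n^'n" and R :: "real^'m^'m" and \<gamma> :: real
begin

fun F :: "(nat \<Rightarrow> real^'n) \<Rightarrow> nat \<Rightarrow> real^'n \<Rightarrow> real^'m \<Rightarrow> real" where
  "F \<sigma> 0 x u = stage_cost Q R x u (\<sigma> 0)"
| "F \<sigma> (Suc d) x u = stage_cost Q R x u (\<sigma> 0) + \<gamma> * (INF v. F (\<lambda>j. \<sigma> (Suc j)) d (A *v x + B *v u) v)"

fun tr :: "real^'n \<Rightarrow> (nat \<Rightarrow> real^'m) \<Rightarrow> nat \<Rightarrow> real^'n" where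
  "tr x w 0 = x"
| "tr x w (Suc j) = A *v tr x w j + B *v w j"

lemma qfun_F: "d \<le> K \<Longrightarrow> qfun A B Q R \<gamma> r k K d x u = F (\<lambda>j. r (k + (K - d) + j)) d x u"
proof (induction d arbitrary: x u)
  case 0 then show ?case by simp
next
  case (Suc d)
  have e: "(\<lambda>j. r (k + (K - Suc d) + Suc j)) = (\<lambda>j. r (k + (K - d) + j))"
    using Suc.prems by (auto intro!: ext simp: algebra_simps Suc_diff_Suc)
  show ?case using Suc by (simp add: e)
qed

lemma tr_shift: "tr x w (Suc j) = tr (A *v x + B *v w 0) (\<lambda>i. w (Suc i)) j"
proof (induction j)
  case 0 then show ?case by simp
next
  case (Suc j)
  then show ?case by simp
qed

lemma traj_tr: "traj A B k x0 u j = tr x0 (\<lambda>i. u (k + i)) j"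
  by (induction j) auto


lemma qf_convex:
  fixes M :: "real^'k^'k"
  assumes "\<forall>z. 0 \<le> z \<bullet> (M *v z)" "0 \<le> t" "t \<le> 1"
  shows "(t *\<^sub>R a + (1 - t) *\<^sub>R b) \<bullet> (M *v (t *\<^sub>R a + (1 - t) *\<^sub>R b))
     \<le> t * (a \<bullet> (M *v a)) + (1 - t) * (b \<bullet> (M *v b))"
proof -
  have id: "t * (a \<bullet> (M *v a)) + (1 - t) * (b \<bullet> (M *v b))
     - (t *\<^sub>R a + (1 - t) *\<^sub>R b) \<bullet> (M *v (t *\<^sub>R a + (1 - t) *\<^sub>R b))
     = t * (1 - t) * ((a - b) \<bullet> (M *v (a - b)))"
    by (simp add: algebra_simps inner_add_left inner_add_right inner_diff_left inner_diff_right)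
  have "0 \<le> t * (1 - t) * ((a - b) \<bullet> (M *v (a - b)))"
    using assms by simp
  then show ?thesis using id by linarith
qed

context
  assumes Qpsd: "\<forall>z. 0 \<le> z \<bullet> (Q *v z)" and Rpsd: "\<forall>z. 0 \<le> z \<bullet> (R *v z)" and g0: "0 \<le> \<gamma>"
begin

lemma stage_nonneg: "0 \<le> stage_cost Q R x u r"
  using Qpsd Rpsd by (simp add: stage_cost_def)

lemma F_nonneg: "0 \<le> F \<sigma> d x u"
proof (induction d arbitrary: \<sigma> x u)
  case 0 then show ?case by (simp add: stage_nonneg)
next
  case (Suc d)
  have "0 \<le> (INF v. F (\<lambda>j. \<sigma> (Suc j)) d (A *v x + B *v u) v)"
    by (rule cINF_greatest) (auto simp: Suc.IH)
  then show ?case using g0 stage_nonneg by simp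
qed

lemma bdd_F: "bdd_below (range (F \<sigma> d x))"
  unfolding bdd_below_def using F_nonneg by blast

lemma F_mono_Suc: "F \<sigma> d x u \<le> F \<sigma> (Suc d) x u"
proof (induction d arbitrary: \<sigma> x u)
  case 0
  have "0 \<le> (INF v. F (\<lambda>j. \<sigma> (Suc j)) 0 (A *v x + B *v u) v)"
    apply (rule cINF_greatest) apply simp apply (rule F_nonneg) done
  then show ?case using g0 by simp
next
  case (Suc d)
  have "(INF v. F (\<lambda>j. \<sigma> (Suc j)) d (A *v x + B *v u) v) \<le> (INF v. F (\<lambda>j. \<sigma> (Suc j)) (Suc d) (A *v x + B *v u) v)"
    apply (rule cINF_mono) apply simp apply (rule bdd_F) using Suc.IH by blast
  then have "\<gamma> * (INF v. F (\<lambda>j. \<sigma> (Suc j)) d (A *v x + B *v u) v) \<le> \<gamma> * (INF v. F (\<lambda>j. \<sigma> (Suc j)) (Suc d) (A *v x + B *v u) v)"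
    using g0 by (rule mult_left_mono)
  then show ?case unfolding F.simps(2)[of \<sigma> d x u] F.simps(2)[of \<sigma> "Suc d" x u] by linarith
qed

lemma F_mono: "d \<le> d' \<Longrightarrow> F \<sigma> d x u \<le> F \<sigma> d' x u"
  using incseq_SucI[of "\<lambda>d. F \<sigma> d x u", OF F_mono_Suc] by (simp add: incseq_def)

lemma F_le_sum: "F \<sigma> d x (w 0) \<le> (\<Sum>j\<le>d. \<gamma> ^ j * stage_cost Q R (tr x w j) (w j) (\<sigma> j))"
proof (induction d arbitrary: \<sigma> x w)
  case 0 then show ?case by simp
next
  case (Suc d)
  let ?y = "A *v x + B *v w 0" and ?w = "\<lambda>i. w (Suc i)" and ?s = "\<lambda>j. \<sigma> (Suc j)"
  have "(INF v. F ?s d ?y v) \<le> F ?s d ?y (?w 0)"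
    by (rule cINF_lower) (auto simp: bdd_F)
  also have "\<dots> \<le> (\<Sum>j\<le>d. \<gamma> ^ j * stage_cost Q R (tr ?y ?w j) (?w j) (?s j))"
    by (rule Suc.IH)
  finally have 1: "\<gamma> * (INF v. F ?s d ?y v) \<le> \<gamma> * (\<Sum>j\<le>d. \<gamma> ^ j * stage_cost Q R (tr ?y ?w j) (?w j) (?s j))"
    using g0 by (rule mult_left_mono)
  have 2: "(\<Sum>j\<le>Suc d. \<gamma> ^ j * stage_cost Q R (tr x w j) (w j) (\<sigma> j))
     = stage_cost Q R x (w 0) (\<sigma> 0) + \<gamma> * (\<Sum>j\<le>d. \<gamma> ^ j * stage_cost Q R (tr ?y ?w j) (?w j) (?s j))"
    unfolding sum.atMost_Suc_shift by (simp add: sum_distrib_left tr_shift mult.assoc del: tr.simps(2))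
  show ?case using 1 2 by simp
qed


lemma stage_convex:
  assumes "0 \<le> t" "t \<le> 1"
  shows "stage_cost Q R (t *\<^sub>R x1 + (1 - t) *\<^sub>R x2) (t *\<^sub>R u1 + (1 - t) *\<^sub>R u2) r
    \<le> t * stage_cost Q R x1 u1 r + (1 - t) * stage_cost Q R x2 u2 r"
proof -
  have e: "t *\<^sub>R x1 + (1 - t) *\<^sub>R x2 - r = t *\<^sub>R (x1 - r) + (1 - t) *\<^sub>R (x2 - r)"
    by (simp add: algebra_simps)
  have gen: "\<And>Qm Rm Qa Qb Ra Rb :: real. Qm \<le> t*Qa+(1-t)*Qb \<Longrightarrow> Rm \<le> t*Ra+(1-t)*Rb \<Longrightarrow>
     (1/2)*(Qm+Rm) \<le> t*((1/2)*(Qa+Ra)) + (1-t)*((1/2)*(Qb+Rb))"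
  proof -
    fix Qm Rm Qa Qb Ra Rb :: real
    assume a: "Qm \<le> t*Qa+(1-t)*Qb" and b: "Rm \<le> t*Ra+(1-t)*Rb"
    have eq: "t*((1/2)*(Qa+Ra)) + (1-t)*((1/2)*(Qb+Rb)) = (1/2)*((t*Qa+(1-t)*Qb) + (t*Ra+(1-t)*Rb))"
      by algebra
    show "(1/2)*(Qm+Rm) \<le> t*((1/2)*(Qa+Ra)) + (1-t)*((1/2)*(Qb+Rb))"
      unfolding eq using add_mono[OF a b] by simp
  qed
  show ?thesis
    unfolding stage_cost_def e
    by (rule gen[OF qf_convex[OF Qpsd assms, of "x1 - r" "x2 - r"] qf_convex[OF Rpsd assms, of u1 u2]])
qed

lemma F_convex:
  assumes t: "0 \<le> t" "t \<le> 1"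
  shows "F \<sigma> d (t *\<^sub>R x1 + (1 - t) *\<^sub>R x2) (t *\<^sub>R u1 + (1 - t) *\<^sub>R u2)
    \<le> t * F \<sigma> d x1 u1 + (1 - t) * F \<sigma> d x2 u2"
proof (induction d arbitrary: \<sigma> x1 x2 u1 u2)
  case 0 then show ?case using stage_convex[OF t] by simp
next
  case (Suc d)
  let ?s = "\<lambda>j. \<sigma> (Suc j)"
  let ?y1 = "A *v x1 + B *v u1" and ?y2 = "A *v x2 + B *v u2"
  have ey: "A *v (t *\<^sub>R x1 + (1 - t) *\<^sub>R x2) + B *v (t *\<^sub>R u1 + (1 - t) *\<^sub>R u2)
     = t *\<^sub>R ?y1 + (1 - t) *\<^sub>R ?y2" by (simp add: algebra_simps)
  have h: "(INF v. F ?s d (t *\<^sub>R ?y1 + (1 - t) *\<^sub>R ?y2) v)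
     \<le> t * (INF v. F ?s d ?y1 v) + (1 - t) * (INF v. F ?s d ?y2 v)"
  proof (rule inf_comb[OF bdd_F bdd_F t])
    fix v1 v2
    have "(INF v. F ?s d (t *\<^sub>R ?y1 + (1 - t) *\<^sub>R ?y2) v) \<le> F ?s d (t *\<^sub>R ?y1 + (1 - t) *\<^sub>R ?y2) (t *\<^sub>R v1 + (1 - t) *\<^sub>R v2)"
      by (rule cINF_lower[OF bdd_F]) simp
    also have "\<dots> \<le> t * F ?s d ?y1 v1 + (1 - t) * F ?s d ?y2 v2" by (rule Suc.IH)
    finally show "(INF v. F ?s d (t *\<^sub>R ?y1 + (1 - t) *\<^sub>R ?y2) v) \<le> t * F ?s d ?y1 v1 + (1 - t) * F ?s d ?y2 v2" .
  qed
  have "\<gamma> * (INF v. F ?s d (t *\<^sub>R ?y1 + (1 - t) *\<^sub>R ?y2) v)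
     \<le> \<gamma> * (t * (INF v. F ?s d ?y1 v) + (1 - t) * (INF v. F ?s d ?y2 v))"
    using h g0 by (rule mult_left_mono)
  then show ?case
    using stage_convex[OF t, of x1 x2 u1 u2 "\<sigma> 0"]
    unfolding F.simps(2) ey by (simp add: algebra_simps)
qed

lemma F_cont: "continuous_on UNIV (F \<sigma> d y)"
proof (rule convex_on_continuous)
  show "convex_on UNIV (F \<sigma> d y)"
  proof (rule convex_onI)
    fix t :: real and a b assume "0 < t" "t < 1"
    then show "F \<sigma> d y ((1 - t) *\<^sub>R a + t *\<^sub>R b) \<le> (1 - t) * F \<sigma> d y a + t * F \<sigma> d y b"
      using F_convex[of "1 - t" \<sigma> d y y a b] by (simp add: algebra_simps scaleR_diff_left[symmetric])
  qed auto
qed simp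

end

fun pseq :: "((nat \<Rightarrow> real^'n) \<Rightarrow> real^'n \<Rightarrow> real^'m \<Rightarrow> real^'m) \<Rightarrow> (nat \<Rightarrow> real^'n) \<Rightarrow> real^'n \<Rightarrow> real^'m \<Rightarrow> nat \<Rightarrow> (real^'n) \<times> (real^'m)" where
  "pseq p \<sigma> x u 0 = (x, u)"
| "pseq p \<sigma> x u (Suc j) = (A *v fst (pseq p \<sigma> x u j) + B *v snd (pseq p \<sigma> x u j),
      p (\<lambda>i. \<sigma> (j + i)) (fst (pseq p \<sigma> x u j)) (snd (pseq p \<sigma> x u j)))"

lemma R_coercive:
  assumes Rpd: "\<forall>z. z \<noteq> 0 \<longrightarrow> 0 < z \<bullet> (R *v z)"
  shows "\<exists>c>0. \<forall>v. c * (norm v)^2 \<le> v \<bullet> (R *v v)"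
proof -
  have cont: "continuous_on (sphere 0 1) (\<lambda>v::real^'m. v \<bullet> (R *v v))"
    by (intro continuous_intros linear_continuous_on matrix_vector_mul_bounded_linear)
  obtain v0 where v0: "v0 \<in> sphere (0::real^'m) 1" "\<forall>y\<in>sphere 0 1. v0 \<bullet> (R *v v0) \<le> y \<bullet> (R *v y)"
    using continuous_attains_inf[OF compact_sphere _ cont] by auto
  have "v0 \<noteq> 0" using v0 by auto
  then have c: "0 < v0 \<bullet> (R *v v0)" using Rpd by auto
  show ?thesis
  proof (intro exI conjI allI)
    show "0 < v0 \<bullet> (R *v v0)" by (rule c)
    fix v :: "real^'m"
    show "v0 \<bullet> (R *v v0) * (norm v)^2 \<le> v \<bullet> (R *v v)"
    proof (cases "v = 0")
      case True then show ?thesis by simp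
    next
      case False
      let ?w = "(1 / norm v) *\<^sub>R v"
      have "?w \<in> sphere 0 1" using False by simp
      then have "v0 \<bullet> (R *v v0) \<le> ?w \<bullet> (R *v ?w)" using v0(2) by blast
      also have "?w \<bullet> (R *v ?w) = (v \<bullet> (R *v v)) / (norm v)^2"
        by (simp add: matrix_vector_mult_scaleR power2_eq_square)
      finally show ?thesis using False by (simp add: field_simps)
    qed
  qed
qed


context
  fixes W :: "(nat \<Rightarrow> real^'n) \<Rightarrow> real^'n \<Rightarrow> real^'m \<Rightarrow> real" and N :: nat
  assumes Qpsd': "\<forall>z. 0 \<le> z \<bullet> (Q *v z)" and Rpd': "\<forall>z. z \<noteq> 0 \<longrightarrow> 0 < z \<bullet> (R *v z)"
    and g0': "0 \<le> \<gamma>"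
    and HW: "\<And>\<sigma> x u. \<forall>j>N. \<sigma> j = 0 \<Longrightarrow> (\<lambda>K. F \<sigma> K x u) \<longlonglongrightarrow> W \<sigma> x u"
begin

lemma Rpsd': "\<forall>z. 0 \<le> z \<bullet> (R *v z)"
  using Rpd' by (metis inner_zero_left le_less matrix_vector_mult_0_right)

lemmas Fnn = F_nonneg[OF Qpsd' Rpsd' g0']
lemmas Fmono = F_mono[OF Qpsd' Rpsd' g0']
lemmas FbddW = bdd_F[OF Qpsd' Rpsd' g0']
lemmas Fcont = F_cont[OF Qpsd' Rpsd' g0']
lemmas Fsum = F_le_sum[OF Qpsd' Rpsd' g0']

lemma W_ge_F: "\<forall>j>N. \<sigma> j = 0 \<Longrightarrow> F \<sigma> d x u \<le> W \<sigma> x u"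
  by (rule incseq_le[OF _ HW]) (auto simp: incseq_def intro: Fmono)

lemma W_nonneg: "\<forall>j>N. \<sigma> j = 0 \<Longrightarrow> 0 \<le> W \<sigma> x u"
  using W_ge_F[of \<sigma> 0 x u] Fnn[of \<sigma> 0 x u] by force

lemma W_lower:
  assumes z: "\<forall>j>N. \<sigma> j = 0"
  shows "ennreal (W \<sigma> x (w 0)) \<le> (\<Sum>j. ennreal (\<gamma> ^ j * stage_cost Q R (tr x w j) (w j) (\<sigma> j)))"
proof (cases "(\<Sum>j. ennreal (\<gamma> ^ j * stage_cost Q R (tr x w j) (w j) (\<sigma> j))) = top")
  case True then show ?thesis by simp
next
  case False
  let ?a = "\<lambda>j. \<gamma> ^ j * stage_cost Q R (tr x w j) (w j) (\<sigma> j)"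
  have a0: "\<And>j. 0 \<le> ?a j" using g0' stage_nonneg[OF Qpsd' Rpsd'] by simp
  obtain c where c: "(\<Sum>j. ennreal (?a j)) = ennreal c" "0 \<le> c" using False
    by (cases "(\<Sum>j. ennreal (?a j))") auto
  have "\<And>K. F \<sigma> K x (w 0) \<le> c"
  proof -
    fix K
    have "ennreal (\<Sum>j\<le>K. ?a j) = (\<Sum>j<Suc K. ennreal (?a j))"
      using a0 by (simp add: lessThan_Suc_atMost)
    also have "\<dots> \<le> (\<Sum>j. ennreal (?a j))"
      unfolding suminf_eq_SUP by (rule SUP_upper) simp
    finally have "(\<Sum>j\<le>K. ?a j) \<le> c" using c by simp
    then show "F \<sigma> K x (w 0) \<le> c" using Fsum[of \<sigma> K x w] by linarith
  qed
  then have "W \<sigma> x (w 0) \<le> c" by (intro LIMSEQ_le_const2[OF HW[OF z]]) auto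
  then show ?thesis using c by simp
qed


lemma Bellman:
  assumes z: "\<forall>j>N. \<sigma> j = 0"
  shows "\<exists>v. stage_cost Q R x u (\<sigma> 0) + \<gamma> * W (\<lambda>j. \<sigma> (Suc j)) (A *v x + B *v u) v \<le> W \<sigma> x u"
proof (cases "\<gamma> = 0")
  case True
  have "F \<sigma> 0 x u = stage_cost Q R x u (\<sigma> 0)" by simp
  then show ?thesis using W_ge_F[OF z, of 0 x u] True by auto
next
  case False
  then have gp: "0 < \<gamma>" using g0' by simp
  define \<tau> where "\<tau> = (\<lambda>j. \<sigma> (Suc j))"
  have zt: "\<forall>j>N. \<tau> j = 0" using z by (simp add: \<tau>_def)
  define y where "y = A *v x + B *v u"
  define st where "st = stage_cost Q R x u (\<sigma> 0)"
  define mK where "mK = (\<lambda>K. INF v. F \<tau> K y v)"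
  define m where "m = (W \<sigma> x u - st) / \<gamma>"
  have hF: "\<And>K. F \<sigma> (Suc K) x u = st + \<gamma> * mK K"
    by (simp add: mK_def st_def \<tau>_def y_def)
  have mKm: "\<And>K. mK K \<le> m"
  proof -
    fix K
    have "st + \<gamma> * mK K \<le> W \<sigma> x u" using W_ge_F[OF z, of "Suc K" x u] hF by simp
    then show "mK K \<le> m" unfolding m_def using gp by (simp add: field_simps)
  qed
  have "\<forall>K. \<exists>v. F \<tau> K y v < mK K + inverse (real (Suc K))"
  proof
    fix K
    have "mK K < mK K + inverse (real (Suc K))" by simp
    then show "\<exists>v. F \<tau> K y v < mK K + inverse (real (Suc K))"
      unfolding mK_def using cINF_less_iff[OF UNIV_not_empty FbddW, of \<tau> K y "mK K + inverse (real (Suc K))"]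
      unfolding mK_def by blast
  qed
  then obtain vs where vs: "\<And>K. F \<tau> K y (vs K) < mK K + inverse (real (Suc K))" by metis
  obtain c where c: "0 < c" "\<And>v. c * (norm v)^2 \<le> v \<bullet> (R *v v)" using R_coercive[OF Rpd'] by auto
  have bnd: "\<And>K. (norm (vs K))^2 \<le> 2 * (m + 1) / c"
  proof -
    fix K
    have "vs K \<bullet> (R *v vs K) \<le> 2 * stage_cost Q R y (vs K) (\<tau> 0)"
      using Qpsd' by (simp add: stage_cost_def)
    also have "\<dots> = 2 * F \<tau> 0 y (vs K)" by simp
    also have "\<dots> \<le> 2 * F \<tau> K y (vs K)" using Fmono[of 0 K] by simp
    also have "\<dots> \<le> 2 * (m + 1)"
    proof -
      have "inverse (real (Suc K)) \<le> 1" by (simp add: field_simps)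
      then show ?thesis using vs[of K] mKm[of K] by (smt (verit))
    qed
    finally have "c * (norm (vs K))^2 \<le> 2 * (m + 1)" using c(2)[of "vs K"] by linarith
    then show "(norm (vs K))^2 \<le> 2 * (m + 1) / c" using c(1) by (simp add: field_simps)
  qed
  have "bounded (range vs)"
    unfolding bounded_iff
  proof (intro exI ballI)
    fix v assume "v \<in> range vs"
    then obtain K where "v = vs K" by auto
    show "norm v \<le> max 1 (2 * (m + 1) / c)"
    proof (cases "norm v \<le> 1")
      case True then show ?thesis by simp
    next
      case False
      then have "norm v * 1 \<le> norm v * norm v" by (intro mult_left_mono) auto
      then have "norm v \<le> (norm v)^2" by (simp add: power2_eq_square)
      then show ?thesis using bnd[of K] \<open>v = vs K\<close> by simp
    qed
  qed
  then obtain vstar \<phi> where phi: "strict_mono \<phi>" "(vs \<circ> \<phi>) \<longlonglongrightarrow> vstar"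
    using bounded_imp_convergent_subsequence by blast
  have le: "F \<tau> K0 y vstar \<le> m" for K0
  proof -
    have lim1: "(\<lambda>K. F \<tau> K0 y (vs (\<phi> K))) \<longlonglongrightarrow> F \<tau> K0 y vstar"
    proof -
      have "isCont (F \<tau> K0 y) vstar"
        using Fcont[of \<tau> K0 y] by (simp add: continuous_on_eq_continuous_at)
      then show ?thesis using isCont_tendsto_compose phi(2) by (auto simp: o_def)
    qed
    have lim2: "(\<lambda>K. m + inverse (real (Suc K))) \<longlonglongrightarrow> m"
      using tendsto_add[OF tendsto_const LIMSEQ_inverse_real_of_nat, of m] by simp
    show ?thesis
    proof (rule LIMSEQ_le[OF lim1 lim2], intro exI allI impI)
      fix K assume K: "K0 \<le> K"
      have pK: "K \<le> \<phi> K" using seq_suble[OF phi(1)] .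
      have "F \<tau> K0 y (vs (\<phi> K)) \<le> F \<tau> (\<phi> K) y (vs (\<phi> K))" using K pK by (intro Fmono) simp
      also have "\<dots> \<le> mK (\<phi> K) + inverse (real (Suc (\<phi> K)))" using vs[of "\<phi> K"] by simp
      also have "\<dots> \<le> m + inverse (real (Suc K))"
        using mKm[of "\<phi> K"] pK by (intro add_mono) (auto simp: field_simps)
      finally show "F \<tau> K0 y (vs (\<phi> K)) \<le> m + inverse (real (Suc K))" .
    qed
  qed
  have "W \<tau> y vstar \<le> m"
    by (rule LIMSEQ_le_const2[OF HW[OF zt]]) (use le in auto)
  then have "st + \<gamma> * W \<tau> y vstar \<le> st + \<gamma> * m" using gp by simp
  also have "\<dots> = W \<sigma> x u" unfolding m_def using gp by simp
  finally show ?thesis unfolding st_def \<tau>_def y_def by blast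
qed


lemma policy:
  assumes z: "\<forall>j>N. \<sigma> j = 0"
  shows "\<exists>w. w 0 = u0 \<and> (\<Sum>j. ennreal (\<gamma> ^ j * stage_cost Q R (tr x w j) (w j) (\<sigma> j))) \<le> ennreal (W \<sigma> x u0)"
proof -
  define pol where "pol = (\<lambda>\<sigma> x u. SOME v. stage_cost Q R x u (\<sigma> 0) + \<gamma> * W (\<lambda>j. \<sigma> (Suc j)) (A *v x + B *v u) v \<le> W \<sigma> x u)"
  have pol: "stage_cost Q R x u (\<sigma> 0) + \<gamma> * W (\<lambda>j. \<sigma> (Suc j)) (A *v x + B *v u) (pol \<sigma> x u) \<le> W \<sigma> x u"
    if "\<forall>j>N. \<sigma> j = 0" for \<sigma> x u
    unfolding pol_def by (rule someI_ex[OF Bellman[OF that]])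
  define ps where "ps = pseq pol \<sigma> x u0"
  define w where "w = (\<lambda>j. snd (ps j))"
  have trw: "tr x w j = fst (ps j)" for j
    by (induction j) (simp_all add: ps_def w_def)
  let ?st = "\<lambda>i. \<gamma> ^ i * stage_cost Q R (fst (ps i)) (snd (ps i)) (\<sigma> i)"
  have inv: "(\<Sum>i<K. ?st i) + \<gamma> ^ K * W (\<lambda>i. \<sigma> (K + i)) (fst (ps K)) (snd (ps K)) \<le> W \<sigma> x u0" for K
  proof (induction K)
    case 0 then show ?case by (simp add: ps_def)
  next
    case (Suc K)
    have zK: "\<forall>j>N. \<sigma> (K + j) = 0" using z by simp
    have sh: "(\<lambda>j. \<sigma> (K + Suc j)) = (\<lambda>i. \<sigma> (Suc K + i))" by simp
    have P: "stage_cost Q R (fst (ps K)) (snd (ps K)) (\<sigma> K) + \<gamma> * W (\<lambda>i. \<sigma> (Suc K + i)) (fst (ps (Suc K))) (snd (ps (Suc K)))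
       \<le> W (\<lambda>i. \<sigma> (K + i)) (fst (ps K)) (snd (ps K))"
      using pol[OF zK, of "fst (ps K)" "snd (ps K)"] unfolding sh by (simp add: ps_def)
    have "\<gamma> ^ K * (stage_cost Q R (fst (ps K)) (snd (ps K)) (\<sigma> K) + \<gamma> * W (\<lambda>i. \<sigma> (Suc K + i)) (fst (ps (Suc K))) (snd (ps (Suc K))))
       \<le> \<gamma> ^ K * W (\<lambda>i. \<sigma> (K + i)) (fst (ps K)) (snd (ps K))"
      using P g0' by (intro mult_left_mono) auto
    then show ?case using Suc.IH by (simp add: algebra_simps)
  qed
  have partial: "(\<Sum>i<K. ?st i) \<le> W \<sigma> x u0" for K
  proof -
    have "0 \<le> \<gamma> ^ K * W (\<lambda>i. \<sigma> (K + i)) (fst (ps K)) (snd (ps K))"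
      using g0' W_nonneg[of "\<lambda>i. \<sigma> (K + i)"] z by simp
    then show ?thesis using inv[of K] by linarith
  qed
  have st0: "0 \<le> ?st i" for i using g0' stage_nonneg[OF Qpsd' Rpsd'] by simp
  show ?thesis
  proof (intro exI conjI)
    show "w 0 = u0" by (simp add: w_def ps_def)
    show "(\<Sum>j. ennreal (\<gamma> ^ j * stage_cost Q R (tr x w j) (w j) (\<sigma> j))) \<le> ennreal (W \<sigma> x u0)"
      unfolding suminf_eq_SUP
    proof (rule SUP_least)
      fix K
      have "(\<Sum>j<K. ennreal (\<gamma> ^ j * stage_cost Q R (tr x w j) (w j) (\<sigma> j))) = ennreal (\<Sum>i<K. ?st i)"
        using st0 unfolding trw by (simp add: w_def)
      also have "\<dots> \<le> ennreal (W \<sigma> x u0)" using partial[of K] by (rule ennreal_leI)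
      finally show "(\<Sum>j<K. ennreal (\<gamma> ^ j * stage_cost Q R (tr x w j) (w j) (\<sigma> j))) \<le> ennreal (W \<sigma> x u0)" .
    qed
  qed
qed

end
end

lemma F_ref0: "F A B Q R \<gamma> \<sigma> K x u = F A B Q R \<gamma> (\<sigma>(0:=v)) K x u + (stage_cost Q R x u (\<sigma> 0) - stage_cost Q R x u v)"
proof (cases K)
  case 0 then show ?thesis by simp
next
  case (Suc d)
  have "(\<lambda>j. (\<sigma>(0:=v)) (Suc j)) = (\<lambda>j. \<sigma> (Suc j))" by simp
  then show ?thesis using Suc by simp
qed

lemma inner_transpose: "a \<bullet> (transpose M *v b) = b \<bullet> (M *v (a::real^'a))"
  by (metis transpose_matrix_vector dot_lmul_matrix inner_commute)

lemma sym_inner: "transpose M = M \<Longrightarrow> a \<bullet> (M *v b) = b \<bullet> (M *v (a::real^'a))"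
  by (metis inner_transpose)

lemma bq_decomp:
  assumes "hux = transpose hxu" "\<And>j. hru j = transpose (hur j)"
  shows "block_qf hxx hxu hxr hux huu hur hrx hru hrr N x u \<sigma> = u \<bullet> (huu *v u)
    + 2 * (u \<bullet> (hux *v x + (\<Sum>j\<le>N. hur j *v \<sigma> j)))
    + (x \<bullet> (hxx *v x) + (\<Sum>j\<le>N. x \<bullet> (hxr j *v \<sigma> j)) + (\<Sum>i\<le>N. \<sigma> i \<bullet> (hrx i *v x))
       + (\<Sum>i\<le>N. \<Sum>j\<le>N. \<sigma> i \<bullet> (hrr i j *v \<sigma> j)))"
proof -
  have 1: "x \<bullet> (hxu *v u) = u \<bullet> (hux *v x)" using assms(1) inner_transpose by metis
  have 2: "(\<Sum>i\<le>N. \<sigma> i \<bullet> (hru i *v u)) = (\<Sum>j\<le>N. u \<bullet> (hur j *v \<sigma> j))"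
    using assms(2) inner_transpose by metis
  show ?thesis unfolding block_qf_def 1 2 by (simp add: inner_add_right inner_sum_right algebra_simps)
qed

theorem corollary1:
  fixes A :: "real^'n^'n" and B :: "real^'m^'n"
    and Q :: "real^'n^'n" and R :: "real^'m^'m" and \<gamma> :: real
    and k N :: nat and r :: "nat \<Rightarrow> real^'n" and xk :: "real^'n"
    and hxx :: "real^'n^'n" and hxu :: "real^'m^'n" and hxr :: "nat \<Rightarrow> real^'n^'n"
    and hux :: "real^'n^'m" and huu :: "real^'m^'m" and hur :: "nat \<Rightarrow> real^'n^'m"
    and hrx :: "nat \<Rightarrow> real^'n^'n" and hru :: "nat \<Rightarrow> real^'m^'n"
    and hrr :: "nat \<Rightarrow> nat \<Rightarrow> real^'n^'n"
  assumes ctrb: "controllable A B"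
    and Qpsd: "psd Q" and Rpd: "pd R"
    and gam: "0 \<le> \<gamma>" "\<gamma> < 1"
    and rzero: "\<And>i. i > k + N \<Longrightarrow> r i = 0"
    and Hsym: "transpose hxx = hxx" "transpose huu = huu" "hux = transpose hxu"
      "\<And>j. hrx j = transpose (hxr j)" "\<And>j. hru j = transpose (hur j)"
      "\<And>i j. hrr j i = transpose (hrr i j)"
    and Hlim: "\<And>\<rho> x u. (\<forall>i. i > k + N \<longrightarrow> \<rho> i = 0) \<Longrightarrow>
       (\<lambda>K. qfun A B Q R \<gamma> \<rho> k K K x u) \<longlonglongrightarrow>
         (1/2) * block_qf hxx hxu hxr hux huu hur hrx hru hrr N x u (\<lambda>j. \<rho> (k + j))"
  shows "(\<exists>u. \<forall>v. Jcost A B Q R \<gamma> r k xk u \<le> Jcost A B Q R \<gamma> r k xk v)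
       \<and> (\<forall>u. (\<forall>v. Jcost A B Q R \<gamma> r k xk u \<le> Jcost A B Q R \<gamma> r k xk v) \<longrightarrow>
            u k = - (matrix_inv huu *v (hux *v xk + (\<Sum>j\<in>{1..N}. hur j *v r (k + j)))))"
proof -
  have Qpsd': "\<forall>z. 0 \<le> z \<bullet> (Q *v z)" using Qpsd by (simp add: psd_def)
  have Rpd': "\<forall>z. z \<noteq> 0 \<longrightarrow> 0 < z \<bullet> (R *v z)" using Rpd by (simp add: pd_def)
  have g0: "0 \<le> \<gamma>" using gam by simp
  define W where "W = (\<lambda>\<sigma> x u. (1/2) * block_qf hxx hxu hxr hux huu hur hrx hru hrr N x u \<sigma>)"
  have HW: "(\<lambda>K. F A B Q R \<gamma> \<sigma> K x u) \<longlonglongrightarrow> W \<sigma> x u" if z: "\<forall>j>N. \<sigma> j = 0" for \<sigma> x u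
  proof -
    define \<rho> where "\<rho> = (\<lambda>i. \<sigma> (i - k))"
    have z\<rho>: "\<forall>i. i > k + N \<longrightarrow> \<rho> i = 0" using z by (simp add: \<rho>_def)
    have e1: "(\<lambda>j. \<rho> (k + j)) = \<sigma>" by (simp add: \<rho>_def)
    have e2: "qfun A B Q R \<gamma> \<rho> k K K x u = F A B Q R \<gamma> \<sigma> K x u" for K
      using qfun_F[of K K A B Q R \<gamma> \<rho> k x u] by (simp add: \<rho>_def)
    show ?thesis using Hlim[OF z\<rho>, of x u] unfolding e1 e2 W_def .
  qed
  have Wlow: "ennreal (W \<sigma> x (w 0)) \<le> (\<Sum>j. ennreal (\<gamma> ^ j * stage_cost Q R (tr A B x w j) (w j) (\<sigma> j)))"
    if z: "\<forall>j>N. \<sigma> j = 0" for \<sigma> x w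
    by (rule W_lower[OF Qpsd' Rpd' g0 HW z]) auto
  have Wpol: "\<exists>w. w 0 = u0 \<and> (\<Sum>j. ennreal (\<gamma> ^ j * stage_cost Q R (tr A B x w j) (w j) (\<sigma> j))) \<le> ennreal (W \<sigma> x u0)"
    if z: "\<forall>j>N. \<sigma> j = 0" for \<sigma> x u0
    by (rule policy[OF Qpsd' Rpd' g0 HW z]) auto
  have Wge: "F A B Q R \<gamma> \<sigma> d x u \<le> W \<sigma> x u" if z: "\<forall>j>N. \<sigma> j = 0" for \<sigma> d x u
    by (rule W_ge_F[OF Qpsd' Rpd' g0 HW z]) auto
  define gg where "gg = (\<lambda>x \<sigma>. hux *v x + (\<Sum>j\<le>N. hur j *v \<sigma> j))"
  have Wd: "W \<sigma> x u = W \<sigma> x 0 + (1/2) * (u \<bullet> (huu *v u)) + u \<bullet> gg x \<sigma>" for \<sigma> x u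
    unfolding W_def bq_decomp[OF Hsym(3,5)] gg_def by (simp add: algebra_simps)
  have z00: "\<forall>j>N. (\<lambda>_. 0::real^'n) j = 0" by simp
  have W000: "W (\<lambda>_. 0) 0 0 = 0" unfolding W_def block_qf_def by simp
  have huu_pd: "0 < u \<bullet> (huu *v u)" if "u \<noteq> 0" for u
  proof -
    have "F A B Q R \<gamma> (\<lambda>_. 0) 0 0 u \<le> W (\<lambda>_. 0) 0 u" by (rule Wge[OF z00])
    then have "(1/2) * (u \<bullet> (R *v u)) \<le> (1/2) * (u \<bullet> (huu *v u))"
      using Wd[of "\<lambda>_. 0" 0 u] W000 by (simp add: stage_cost_def gg_def)
    then show ?thesis using Rpd' that by force
  qed
  have hur0: "hur 0 *v s = 0" for s
  proof -
    define \<sigma>s where "\<sigma>s = (\<lambda>j::nat. if j = 0 then s else (0::real^'n))"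
    have zs: "\<forall>j>N. \<sigma>s j = 0" by (simp add: \<sigma>s_def)
    have e0: "\<sigma>s(0 := 0) = (\<lambda>_. 0)" by (auto simp: \<sigma>s_def)
    have WW: "W \<sigma>s 0 u = W (\<lambda>_. 0) 0 u + (stage_cost Q R 0 u s - stage_cost Q R 0 u 0)" for u
    proof -
      have "(\<lambda>K. F A B Q R \<gamma> \<sigma>s K 0 u) \<longlonglongrightarrow> W (\<lambda>_. 0) 0 u + (stage_cost Q R 0 u s - stage_cost Q R 0 u 0)"
        using tendsto_add[OF HW[OF z00, of 0 u] tendsto_const[of "stage_cost Q R 0 u s - stage_cost Q R 0 u 0"]]
        using F_ref0[of A B Q R \<gamma> \<sigma>s _ 0 u 0] unfolding e0 by (simp add: \<sigma>s_def)
      then show ?thesis using LIMSEQ_unique HW[OF zs] by blast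
    qed
    have cst: "stage_cost Q R 0 u s - stage_cost Q R 0 u 0 = (1/2) * (s \<bullet> (Q *v s))" for u
    proof -
      have "Q *v (0 - s) = - (Q *v s)" by (metis matrix_vector_mult_diff_distrib matrix_vector_mult_0_right diff_0)
      then show ?thesis by (simp add: stage_cost_def field_simps)
    qed
    have gs: "gg 0 \<sigma>s = hur 0 *v s"
      by (simp add: gg_def \<sigma>s_def if_distrib[of "\<lambda>v. _ *v v"] sum.delta cong: if_cong)
    have "u \<bullet> (hur 0 *v s) = 0" for u
      using WW[of u] WW[of 0] Wd[of \<sigma>s 0 u] Wd[of "\<lambda>_. 0" 0 u] cst[of u] cst[of 0] gs
      by (simp add: gg_def)
    from this[of "hur 0 *v s"] show ?thesis by simp
  qed
  define \<sigma>0 where "\<sigma>0 = (\<lambda>j. r (k + j))"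
  have z0: "\<forall>j>N. \<sigma>0 j = 0" using rzero by (simp add: \<sigma>0_def)
  have Jeq: "Jcost A B Q R \<gamma> r k xk u = (\<Sum>j. ennreal (\<gamma> ^ j * stage_cost Q R (tr A B xk (\<lambda>i. u (k + i)) j) ((\<lambda>i. u (k + i)) j) (\<sigma>0 j)))" for u
    by (simp add: Jcost_def traj_tr \<sigma>0_def)
  have Jlow: "ennreal (W \<sigma>0 xk (u k)) \<le> Jcost A B Q R \<gamma> r k xk u" for u
    unfolding Jeq using Wlow[OF z0, of xk "\<lambda>i. u (k + i)"] by simp
  have Jpol: "\<exists>u. Jcost A B Q R \<gamma> r k xk u \<le> ennreal (W \<sigma>0 xk u0)" for u0
  proof -
    obtain w where w: "w 0 = u0" "(\<Sum>j. ennreal (\<gamma> ^ j * stage_cost Q R (tr A B xk w j) (w j) (\<sigma>0 j))) \<le> ennreal (W \<sigma>0 xk u0)"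
      using Wpol[OF z0] by blast
    show ?thesis
    proof (rule exI[of _ "\<lambda>i. w (i - k)"])
      show "Jcost A B Q R \<gamma> r k xk (\<lambda>i. w (i - k)) \<le> ennreal (W \<sigma>0 xk u0)"
        unfolding Jeq using w(2) by simp
    qed
  qed
  have "\<exists>B. B ** huu = mat 1"
    unfolding matrix_left_invertible_ker
  proof (intro allI impI)
    fix v assume "huu *v v = 0"
    then show "v = 0" using huu_pd[of v] by (metis inner_zero_right less_irrefl)
  qed
  then have "invertible huu" using invertible_left_inverse by blast
  then have inv: "huu ** matrix_inv huu = mat 1"
    unfolding invertible_def matrix_inv_def by (rule someI_ex[THEN conjunct1])
  define gs where "gs = hux *v xk + (\<Sum>j\<in>{1..N}. hur j *v r (k + j))"
  define us where "us = - (matrix_inv huu *v gs)"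
  have ggs: "gg xk \<sigma>0 = gs"
  proof -
    have "{..N} = insert 0 {1..N}" by auto
    then have "(\<Sum>j\<le>N. hur j *v \<sigma>0 j) = hur 0 *v \<sigma>0 0 + (\<Sum>j\<in>{1..N}. hur j *v \<sigma>0 j)" by simp
    then show ?thesis using hur0 by (simp add: gg_def gs_def \<sigma>0_def)
  qed
  have Hus: "huu *v us = - gs"
  proof -
    have "huu *v us = - (huu *v (matrix_inv huu *v gs))"
      unfolding us_def by (metis diff_0 matrix_vector_mult_0_right matrix_vector_mult_diff_distrib)
    also have "\<dots> = - ((huu ** matrix_inv huu) *v gs)" by (simp add: matrix_vector_mul_assoc)
    finally have "huu *v us = - ((huu ** matrix_inv huu) *v gs)" .
    then show ?thesis using inv by simp
  qed
  have Wmin: "W \<sigma>0 xk u = W \<sigma>0 xk us + (1/2) * ((u - us) \<bullet> (huu *v (u - us)))" for u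
  proof -
    have s1: "us \<bullet> (huu *v u) = u \<bullet> (huu *v us)" by (rule sym_inner[OF Hsym(2)])
    have ex: "(u - us) \<bullet> (huu *v (u - us)) = u \<bullet> (huu *v u) - u \<bullet> (huu *v us) - us \<bullet> (huu *v u) + us \<bullet> (huu *v us)"
      by (simp add: matrix_vector_mult_diff_distrib inner_diff_left inner_diff_right)
    have g1: "u \<bullet> gs = - (u \<bullet> (huu *v us))" "us \<bullet> gs = - (us \<bullet> (huu *v us))"
      using Hus by (simp_all add: minus_equation_iff[of gs])
    show ?thesis using Wd[of \<sigma>0 xk u] Wd[of \<sigma>0 xk us] ggs ex s1 g1 by (simp add: algebra_simps)
  qed
  have Wnn: "0 \<le> W \<sigma>0 xk u" for u
    by (rule W_nonneg[OF Qpsd' Rpd' g0 HW z0]) auto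
  have Wus: "W \<sigma>0 xk us \<le> W \<sigma>0 xk u" for u
    using Wmin[of u] huu_pd[of "u - us"] by (cases "u = us") auto
  show ?thesis
  proof
    obtain u where u: "Jcost A B Q R \<gamma> r k xk u \<le> ennreal (W \<sigma>0 xk us)" using Jpol by blast
    show "\<exists>u. \<forall>v. Jcost A B Q R \<gamma> r k xk u \<le> Jcost A B Q R \<gamma> r k xk v"
    proof (intro exI allI)
      fix v
      have "ennreal (W \<sigma>0 xk us) \<le> ennreal (W \<sigma>0 xk (v k))" using Wus by (rule ennreal_leI)
      then show "Jcost A B Q R \<gamma> r k xk u \<le> Jcost A B Q R \<gamma> r k xk v"
        using u Jlow[of v] by (meson order_trans)
    qed
  next
    show "\<forall>u. (\<forall>v. Jcost A B Q R \<gamma> r k xk u \<le> Jcost A B Q R \<gamma> r k xk v) \<longrightarrow>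
            u k = - (matrix_inv huu *v (hux *v xk + (\<Sum>j\<in>{1..N}. hur j *v r (k + j))))"
    proof (intro allI impI)
      fix u assume opt: "\<forall>v. Jcost A B Q R \<gamma> r k xk u \<le> Jcost A B Q R \<gamma> r k xk v"
      obtain v where v: "Jcost A B Q R \<gamma> r k xk v \<le> ennreal (W \<sigma>0 xk us)" using Jpol by blast
      have "ennreal (W \<sigma>0 xk (u k)) \<le> ennreal (W \<sigma>0 xk us)"
        using Jlow[of u] opt v by (meson order_trans)
      then have "W \<sigma>0 xk (u k) \<le> W \<sigma>0 xk us" using Wnn by simp
      then have "(u k - us) \<bullet> (huu *v (u k - us)) \<le> 0" using Wmin[of "u k"] by simp
      then have "u k = us" using huu_pd[of "u k - us"] by force
      then show "u k = - (matrix_inv huu *v (hux *v xk + (\<Sum>j\<in>{1..N}. hur j *v r (k + j))))"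
        by (simp add: us_def gs_def)
    qed
  qed
qed

end
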